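(* In the qubit system ($d=2$, $\mathcal H=\mathbb C^2$), for every $\alpha\in(1,2)$ and $\beta\in(-\infty,0)\cup(0,1)$ there exist a unitary $U_0$ on $\mathbb C^2$ and a pure input state $|\psi_0\rangle\in\mathbb C^2$ such that $$M_{\alpha,\beta}(U_0|\psi_0\rangle\langle\psi_0|U_0^\dagger)-M_{\alpha,\beta}(|\psi_0\rangle\langle\psi_0|)>\mathcal M_{\alpha,\beta}(U_0).$$
   Context: For a qubit, the pure stabilizer states are $|0\rangle,|1\rangle,|\pm\rangle=(|0\rangle\pm|1\rangle)/\sqrt2,|\pm i\rangle=(|0\rangle\pm i|1\rangle)/\sqrt2$ (up to global phase), and stabilizer states ($\mathcal S$) are their convex combinations. For $\alpha\in(0,1)\cup(1,\infty)$, $\beta\in(-\infty,0)\cup(0,\infty)$: $S_{\alpha,\beta}(\rho)=\frac{1}{(1-\alpha)\beta}[(\mathrm{Tr}\rho^\alpha)^\beta-1]$, $J_{\alpha,\beta}(\rho,\sigma)=S_{\alpha,\beta}(\tfrac{\rho+\sigma}{2})-\tfrac12S_{\alpha,\beta}(\rho)-\tfrac12S_{\alpha,\beta}(\sigma)$; for a pure state $M_{\alpha,\beta}(|\psi\rangle\langle\psi|)=\min_{|\phi\rangle}J_{\alpha,\beta}(|\psi\rangle\langle\psi|,|\phi\rangle\langle\phi|)$ over pure stabilizer states $|\phi\rangle$, and for general $\rho$, $M_{\alpha,\beta}(\rho)=\min\sum_jp_jM_{\alpha,\beta}(|\psi_j\rangle\langle\psi_j|)$ over pure-state decompositions of $\rho$.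 The magic generating power of a unitary $U$ is $\mathcal M_{\alpha,\beta}(U)=\max_{\rho\in\mathcal S}M_{\alpha,\beta}(U\rho U^\dagger)$. *)

theory Defs
  imports "HOL-Analysis.Analysis"
begin

type_synonym qvec = "complex ^ 2"
type_synonym qmat = "complex ^ 2 ^ 2"

definition adj :: "qmat \<Rightarrow> qmat" where
  "adj U = (\<chi> i j. cnj (U $ j $ i))"

definition unitary :: "qmat \<Rightarrow> bool" where
  "unitary U \<longleftrightarrow> U ** adj U = mat 1 \<and> adj U ** U = mat 1"

definition proj :: "qvec \<Rightarrow> qmat" where
  "proj \<psi> = (\<chi> i j. \<psi> $ i * cnj (\<psi> $ j))"

definition unit_vec :: "qvec \<Rightarrow> bool" where
  "unit_vec \<psi> \<longleftrightarrow> norm \<psi> = 1"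

definition mtrace :: "qmat \<Rightarrow> complex" where
  "mtrace A = A $ 1 $ 1 + A $ 2 $ 2"

definition mdet :: "qmat \<Rightarrow> complex" where
  "mdet A = A $ 1 $ 1 * A $ 2 $ 2 - A $ 1 $ 2 * A $ 2 $ 1"

definition eig_plus :: "qmat \<Rightarrow> real" where
  "eig_plus A = (Re (mtrace A) + sqrt ((Re (mtrace A))\<^sup>2 - 4 * Re (mdet A))) / 2"

definition eig_minus :: "qmat \<Rightarrow> real" where
  "eig_minus A = (Re (mtrace A) - sqrt ((Re (mtrace A))\<^sup>2 - 4 * Re (mdet A))) / 2"

text \<open>Tr rho^alpha via the spectral decomposition: sum of alpha-th powers of eigenvalues.\<close>
definition tr_pow :: "real \<Rightarrow> qmat \<Rightarrow> real" where
  "tr_pow \<alpha> \<rho> = eig_plus \<rho> powr \<alpha> + eig_minus \<rho> powr \<alpha>"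

definition S_ent :: "real \<Rightarrow> real \<Rightarrow> qmat \<Rightarrow> real" where
  "S_ent \<alpha> \<beta> \<rho> = ((tr_pow \<alpha> \<rho>) powr \<beta> - 1) / ((1 - \<alpha>) * \<beta>)"

definition J_div :: "real \<Rightarrow> real \<Rightarrow> qmat \<Rightarrow> qmat \<Rightarrow> real" where
  "J_div \<alpha> \<beta> \<rho> \<sigma> =
     S_ent \<alpha> \<beta> ((1/2) *\<^sub>R (\<rho> + \<sigma>)) - (1/2) * S_ent \<alpha> \<beta> \<rho> - (1/2) * S_ent \<alpha> \<beta> \<sigma>"

text \<open>The six pure single-qubit stabilizer states (up to global phase).\<close>
definition stab_pure :: "qvec set" where
  "stab_pure = {vector [1, 0], vector [0, 1],
                vector [1 / sqrt 2, 1 / sqrt 2], vector [1 / sqrt 2, - 1 / sqrt 2],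
                vector [1 / sqrt 2, \<i> / sqrt 2], vector [1 / sqrt 2, - \<i> / sqrt 2]}"

definition stab_states :: "qmat set" where
  "stab_states = convex hull (proj ` stab_pure)"

definition M_pure :: "real \<Rightarrow> real \<Rightarrow> qvec \<Rightarrow> real" where
  "M_pure \<alpha> \<beta> \<psi> = Min ((\<lambda>\<phi>. J_div \<alpha> \<beta> (proj \<psi>) (proj \<phi>)) ` stab_pure)"

definition decomp :: "qmat \<Rightarrow> (real \<times> qvec) list \<Rightarrow> bool" where
  "decomp \<rho> ds \<longleftrightarrow> (\<forall>(p, \<psi>) \<in> set ds. p \<ge> 0 \<and> unit_vec \<psi>)
      \<and> (\<Sum>(p, \<psi>)\<leftarrow>ds. p) = 1
      \<and> \<rho> = (\<Sum>(p, \<psi>)\<leftarrow>ds. p *\<^sub>R proj \<psi>)"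

definition M_mixed :: "real \<Rightarrow> real \<Rightarrow> qmat \<Rightarrow> real" where
  "M_mixed \<alpha> \<beta> \<rho> = Inf {(\<Sum>(p, \<psi>)\<leftarrow>ds. p * M_pure \<alpha> \<beta> \<psi>) | ds. decomp \<rho> ds}"

definition magic_gen_power :: "real \<Rightarrow> real \<Rightarrow> qmat \<Rightarrow> real" where
  "magic_gen_power \<alpha> \<beta> U = Sup ((\<lambda>\<rho>. M_mixed \<alpha> \<beta> (U ** \<rho> ** adj U)) ` stab_states)"

end

theory Submission
  imports Defs
begin

lemma B01:
  fixes w a :: real
  assumes "0 \<le> w" "w \<le> 1" "a > 0"
  shows "a powr w \<le> 1 + w * (a - 1)"
  using Youngs_inequality_0[of w "1-w" a 1] assms by (simp add: algebra_simps)

lemma Bp: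
  fixes p z :: real
  assumes "p \<ge> 1" "z > 0"
  shows "z powr p \<ge> 1 + p * (z - 1)"
proof -
  have a: "z powr p > 0" using assms by simp
  have "(z powr p) powr (1/p) = z" using assms by (simp add: powr_powr)
  moreover have "(z powr p) powr (1/p) \<le> 1 + (1/p) * (z powr p - 1)"
    using B01[of "1/p" "z powr p"] assms a by simp
  ultimately have "z \<le> 1 + (1/p) * (z powr p - 1)" by simp
  hence "p * z \<le> p * (1 + (1/p) * (z powr p - 1))" using assms by simp
  also have "\<dots> = p + (z powr p - 1)" using assms by (simp add: algebra_simps)
  finally show ?thesis by (simp add: algebra_simps)
qed

lemma Bneg:
  fixes b t :: real
  assumes "b < 0" "t > 0"
  shows "t powr b \<ge> 1 + b * (t - 1)"
proof -
  have "t powr b = exp (b * ln t)" using assms by (simp add: powr_def)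
  also have "\<dots> \<ge> 1 + b * ln t" by (rule exp_ge_add_one_self)
  moreover have "b * ln t \<ge> b * (t - 1)"
    using ln_le_minus_one[OF assms(2)] assms(1) by (simp add: mult_le_cancel_left_neg)
  ultimately show ?thesis by linarith
qed

lemma Bphi:
  fixes b t :: real
  assumes "b < 1" "b \<noteq> 0" "t > 0"
  shows "(t powr b - 1) / b \<le> t - 1"
proof (cases "b > 0")
  case True
  then have "t powr b - 1 \<le> b * (t - 1)" using B01[of b t] assms by simp
  then show ?thesis using True by (simp add: divide_simps mult.commute)
next
  case False
  then have bn: "b < 0" using assms by simp
  then have "t powr b - 1 \<ge> b * (t - 1)" using Bneg[of b t] assms by simp
  then show ?thesis using bn by (simp add: divide_simps mult.commute)
qed

lemma tangent_convex:
  fixes p t t0 :: real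
  assumes "p \<ge> 1" "t \<ge> 0" "t0 > 0"
  shows "t powr p \<ge> t0 powr p + p * t0 powr (p - 1) * (t - t0)"
proof (cases "t = 0")
  case True
  have "t0 powr p = t0 powr (p - 1) * t0" using assms by (simp add: powr_diff)
  then have "t0 powr p + p * t0 powr (p - 1) * (t - t0) = (1 - p) * t0 powr p"
    using True by (simp add: algebra_simps)
  also have "\<dots> \<le> 0" using assms by (simp add: mult_nonpos_nonneg)
  finally show ?thesis using True assms by simp
next
  case False
  then have tp: "t > 0" using assms by simp
  have "(t / t0) powr p \<ge> 1 + p * (t / t0 - 1)" using Bp[of p "t/t0"] assms tp by simp
  then have "t powr p / t0 powr p \<ge> 1 + p * (t / t0 - 1)"
    using assms tp by (simp add: powr_divide)
  then have "t powr p \<ge> t0 powr p * (1 + p * (t / t0 - 1))"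
    using assms by (simp add: divide_simps mult.commute)
  moreover have "t0 powr p * (1 + p * (t / t0 - 1)) = t0 powr p + p * (t0 powr p / t0) * (t - t0)"
    using assms by (simp add: field_simps)
  moreover have "t0 powr p / t0 = t0 powr (p - 1)" using assms by (simp add: powr_diff)
  ultimately show ?thesis by simp
qed

lemma tangent_concave:
  fixes s a b :: real
  assumes "0 \<le> s" "s \<le> 1" "a > 0" "b > 0"
  shows "b powr s \<le> a powr s + s * a powr (s - 1) * (b - a)"
proof -
  have "(b / a) powr s \<le> 1 + s * (b / a - 1)" using B01[of s "b/a"] assms by simp
  then have "b powr s / a powr s \<le> 1 + s * (b / a - 1)"
    using assms by (simp add: powr_divide)
  then have "b powr s \<le> a powr s * (1 + s * (b / a - 1))"
    using assms by (simp add: divide_simps mult.commute)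
  moreover have "a powr s * (1 + s * (b / a - 1)) = a powr s + s * (a powr s / a) * (b - a)"
    using assms by (simp add: field_simps)
  moreover have "a powr s / a = a powr (s - 1)" using assms by (simp add: powr_diff)
  ultimately show ?thesis by simp
qed

definition yf :: "real \<Rightarrow> real \<Rightarrow> real" where
  "yf a l = (1 - l) powr a + l powr a"

definition Kf :: "real \<Rightarrow> real \<Rightarrow> real \<Rightarrow> real" where
  "Kf a b l = ((yf a l) powr b - 1) / ((1 - a) * b)"

lemma yf_pos: "l < 1 \<Longrightarrow> yf a l > 0"
  unfolding yf_def by (simp add: add_pos_nonneg)

lemma yf_mono:
  fixes a l m :: real
  assumes "1 < a" "0 \<le> l" "l \<le> m" "m \<le> 1/2"
  shows "yf a m \<le> yf a l"
proof (cases "m = 0")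
  case True then show ?thesis using assms by simp
next
  case False
  then have mp: "m > 0" using assms by simp
  have t1: "(1 - l) powr a \<ge> (1 - m) powr a + a * (1 - m) powr (a - 1) * (m - l)"
    using tangent_convex[of a "1 - l" "1 - m"] assms by simp
  have t2: "l powr a \<ge> m powr a + a * m powr (a - 1) * (l - m)"
    using tangent_convex[of a l m] assms mp by simp
  have "m powr (a - 1) \<le> (1 - m) powr (a - 1)"
    using assms mp by (intro powr_mono2) auto
  then have "a * m powr (a - 1) * (m - l) \<le> a * (1 - m) powr (a - 1) * (m - l)"
    using assms by (intro mult_right_mono mult_left_mono) auto
  then show ?thesis using t1 t2 unfolding yf_def by (simp add: algebra_simps)
qed

lemma yf_le1:
  fixes a l :: real
  assumes "1 < a" "0 \<le> l" "l \<le> 1/2"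
  shows "yf a l \<le> 1"
  using yf_mono[of a 0 l] assms by (simp add: yf_def)

lemma Kf_0: "Kf a b 0 = 0" by (simp add: Kf_def yf_def)

lemma Kf_mono:
  fixes a b l m :: real
  assumes "1 < a" "b \<noteq> 0" "0 \<le> l" "l \<le> m" "m \<le> 1/2"
  shows "Kf a b l \<le> Kf a b m"
proof -
  have ym: "yf a m \<le> yf a l" using yf_mono assms by blast
  have pm: "yf a m > 0" using assms by (intro yf_pos) auto
  show ?thesis
  proof (cases "b > 0")
    case True
    have "yf a m powr b \<le> yf a l powr b" using ym pm True by (intro powr_mono2) auto
    moreover have "(1 - a) * b < 0" using True assms by (simp add: mult_neg_pos)
    ultimately show ?thesis unfolding Kf_def by (intro divide_right_mono_neg) auto
  next
    case False
    then have bn: "b < 0" using assms by simp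
    have "yf a l powr b \<le> yf a m powr b" using ym pm bn by (intro powr_mono2') auto
    moreover have "(1 - a) * b > 0" using bn assms by (simp add: mult_neg_neg)
    ultimately show ?thesis unfolding Kf_def by (intro divide_right_mono) auto
  qed
qed

lemma Kf_nonneg:
  assumes "1 < a" "b \<noteq> 0" "0 \<le> l" "l \<le> 1/2"
  shows "0 \<le> Kf a b l"
  using Kf_mono[of a b 0 l] assms by (simp add: Kf_0)

lemma one_minus_powr_le:
  fixes p s :: real
  assumes "p > 0" "s \<ge> 0"
  shows "1 - p powr s \<le> - s * ln p"
proof -
  have "p powr s = exp (s * ln p)" using assms by (simp add: powr_def)
  also have "\<dots> \<ge> 1 + s * ln p" by (rule exp_ge_add_one_self)
  finally show ?thesis by simp
qed

lemma div_le_aux: "(c::real) > 0 \<Longrightarrow> P / c \<le> Y \<Longrightarrow> P \<le> c * Y"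
  by (simp add: pos_divide_le_eq mult.commute)

lemma auxK: fixes P Q a b :: real shows "a \<noteq> 1 \<Longrightarrow> b \<noteq> 0 \<Longrightarrow> (P - 1)/((1-a)*b) - (Q-1)/((1-a)*b) = ((Q-P)/b)/(a-1)"
proof -
  assume "a \<noteq> 1" "b \<noteq> 0"
  then have "(1-a)*b \<noteq> 0" "a - 1 \<noteq> 0" by auto
  then show ?thesis by (simp add: diff_divide_distrib[symmetric] divide_divide_eq_left algebra_simps) (simp add: divide_simps; algebra)
qed
lemma auxK2: fixes P a b :: real shows "a \<noteq> 1 \<Longrightarrow> b \<noteq> 0 \<Longrightarrow> (P - 1)/((1-a)*b) = ((1-P)/b)/(a-1)"
  using auxK[of a b P 1] by simp

lemma key_ineq:
  fixes a b l1 l2 l3 L :: real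
  assumes a1: "1 < a" and a2: "a < 2" and b1: "b < 1" and b0: "b \<noteq> 0"
    and l3p: "0 < l3" and l32: "l3 \<le> l2" and l21: "l2 < l1" and l1h: "l1 \<le> 1/2"
    and lnL: "- ln l3 \<le> L"
    and num: "l3 * (1 + L) < (l1 - l2) * (1 - 2 * l1)"
  shows "Kf a b l3 < Kf a b l1 - Kf a b l2"
proof -
  define s where "s = a - 1"
  have s0: "0 < s" and s1: "s < 1 \<or> s \<ge> 1" using a1 by (auto simp: s_def)
  define y1 y2 y3 where "y1 = yf a l1" "y2 = yf a l2" "y3 = yf a l3"
  have y1p: "y1 > 0" "y2 > 0" "y3 > 0" unfolding y1_y2_y3_def using l1h l21 l32 l3p
    by (auto intro!: yf_pos)
  have y12: "y1 \<le> y2" unfolding y1_y2_y3_def using yf_mono[of a l2 l1] a1 l21 l32 l3p l1h by auto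
  have y23: "y2 \<le> y3" unfolding y1_y2_y3_def using yf_mono[of a l3 l2] a1 l21 l32 l3p l1h by auto
  have y3le: "y3 \<le> 1" unfolding y1_y2_y3_def using yf_le1[of a l3] a1 l21 l32 l3p l1h by auto
  have "((y1 / y2) powr b - 1) / b \<le> y1 / y2 - 1" using Bphi[of b "y1/y2"] b1 b0 y1p by simp
  moreover have "(y1 / y2) powr b = y1 powr b / y2 powr b" using y1p by (simp add: powr_divide)
  ultimately have "(y1 powr b / y2 powr b - 1) / b \<le> y1 / y2 - 1" by simp
  moreover have "(y1 powr b / y2 powr b - 1) / b = (y1 powr b - y2 powr b) / b / y2 powr b"
    using y1p by (simp add: field_simps)
  ultimately have "(y1 powr b - y2 powr b) / b / y2 powr b \<le> y1 / y2 - 1" by simp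
  then have "(y1 powr b - y2 powr b) / b \<le> y2 powr b * (y1 / y2 - 1)"
    using y1p by (intro div_le_aux) auto
  also have "y2 powr b * (y1 / y2 - 1) = - (y2 powr (b - 1) * (y2 - y1))"
    using y1p by (simp add: powr_diff field_simps)
  finally have A0: "(y1 powr b - y2 powr b) / b \<le> - (y2 powr (b - 1) * (y2 - y1))" .
  have "(y2 powr b - y1 powr b) / b = - ((y1 powr b - y2 powr b) / b)"
    by (simp add: diff_divide_distrib)
  with A0 have A: "y2 powr (b - 1) * (y2 - y1) \<le> (y2 powr b - y1 powr b) / b" by linarith
  have KA: "Kf a b l1 - Kf a b l2 = ((y2 powr b - y1 powr b) / b) / (a - 1)"
    unfolding Kf_def y1_y2_y3_def using a1 b0 auxK auxK2 by simp
  have "((1 / y3) powr b - 1) / b \<le> 1 / y3 - 1" using Bphi[of b "1/y3"] b1 b0 y1p by simp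
  moreover have "(1 / y3) powr b = 1 / y3 powr b" using y1p by (simp add: powr_divide)
  ultimately have "(1 / y3 powr b - 1) / b \<le> 1 / y3 - 1" by simp
  moreover have "(1 / y3 powr b - 1) / b = ((1 - y3 powr b) / b) / y3 powr b"
    using y1p by (simp add: field_simps)
  ultimately have "((1 - y3 powr b) / b) / y3 powr b \<le> 1 / y3 - 1" by simp
  then have "(1 - y3 powr b) / b \<le> y3 powr b * (1 / y3 - 1)"
    using y1p by (intro div_le_aux) auto
  also have "y3 powr b * (1 / y3 - 1) = y3 powr (b - 1) * (1 - y3)"
    using y1p by (simp add: powr_diff field_simps)
  finally have B: "(1 - y3 powr b) / b \<le> y3 powr (b - 1) * (1 - y3)" .
  have KB: "Kf a b l3 = ((1 - y3 powr b) / b) / (a - 1)"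
    unfolding Kf_def y1_y2_y3_def using a1 b0 auxK auxK2 by simp
  have y32: "y3 powr (b - 1) \<le> y2 powr (b - 1)"
    using y1p y23 b1 by (intro powr_mono2') auto
  have t1: "(1 - l2) powr a \<ge> (1 - l1) powr a + a * (1 - l1) powr (a - 1) * (l1 - l2)"
    using tangent_convex[of a "1 - l2" "1 - l1"] a1 l21 l1h l32 l3p by simp
  have t2: "l2 powr a \<ge> l1 powr a + a * l1 powr (a - 1) * (l2 - l1)"
    using tangent_convex[of a l2 l1] a1 l21 l32 l3p by simp
  have yd: "y2 - y1 \<ge> a * (l1 - l2) * ((1 - l1) powr s - l1 powr s)"
    using t1 t2 unfolding y1_y2_y3_def yf_def s_def by (simp add: algebra_simps)
  have s1: "s \<le> 1" using a2 by (simp add: s_def)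
  have l1p: "0 < l1" "l1 < 1" using l21 l32 l3p l1h by auto
  have tc: "l1 powr s \<le> (1 - l1) powr s + s * (1 - l1) powr (s - 1) * (l1 - (1 - l1))"
    using tangent_concave[of s "1 - l1" l1] s0 s1 l1p by simp
  have ge1: "(1 - l1) powr (s - 1) \<ge> 1"
  proof -
    have "(1 - l1) powr (1 - s) \<le> 1" using l1p s1 by (intro powr_le1) auto
    moreover have "(1 - l1) powr (1 - s) > 0" using l1p by simp
    moreover have "(1 - l1) powr (s - 1) = 1 / (1 - l1) powr (1 - s)"
      using l1p by (simp add: powr_minus_divide[symmetric])
    ultimately show ?thesis by simp
  qed
  have brn: "0 \<le> s * (1 - 2 * l1)" using s0 l1h by simp
  have "s * (1 - 2 * l1) \<le> s * (1 - 2 * l1) * (1 - l1) powr (s - 1)"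
    using mult_left_mono[OF ge1 brn] by simp
  with tc have br: "(1 - l1) powr s - l1 powr s \<ge> s * (1 - 2 * l1)" by (simp add: algebra_simps)
  have "(l1 - l2) * (s * (1 - 2 * l1)) \<le> (l1 - l2) * ((1 - l1) powr s - l1 powr s)"
    using br l21 by (intro mult_left_mono) auto
  also have "\<dots> \<le> a * ((l1 - l2) * ((1 - l1) powr s - l1 powr s))"
  proof -
    have "0 \<le> (l1 - l2) * ((1 - l1) powr s - l1 powr s)" using l21 br brn by simp
    then show ?thesis using mult_right_mono[of 1 a "(l1 - l2) * ((1 - l1) powr s - l1 powr s)"] a1 by simp
  qed
  finally have Y12: "(l1 - l2) * (s * (1 - 2 * l1)) \<le> y2 - y1" using yd by (simp add: algebra_simps)
  have l3l: "l3 < 1" using l32 l21 l1h by simp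
  have pa: "\<And>x. x > 0 \<Longrightarrow> x powr a = x * x powr s"
  proof -
    fix x :: real assume "x > 0"
    have "x powr (1 + (a - 1)) = x powr 1 * x powr (a - 1)" by (rule powr_add)
    then show "x powr a = x * x powr s" using \<open>x > 0\<close> by (simp add: s_def)
  qed
  have y3e: "1 - y3 = (1 - l3) * (1 - (1 - l3) powr s) + l3 * (1 - l3 powr s)"
    unfolding y1_y2_y3_def yf_def using pa[of l3] pa[of "1 - l3"] l3p l3l by (simp add: algebra_simps)
  have "1 - (1 - l3) powr s \<le> - s * ln (1 - l3)" using one_minus_powr_le[of "1 - l3" s] l3l s0 by simp
  moreover have "- ln (1 - l3) \<le> l3 / (1 - l3)"
  proof -
    have "ln (1 / (1 - l3)) \<le> 1 / (1 - l3) - 1" using l3l by (intro ln_le_minus_one) auto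
    moreover have "ln (1 / (1 - l3)) = - ln (1 - l3)" using l3l by (simp add: ln_div)
    moreover have "1 / (1 - l3) - 1 = l3 / (1 - l3)" using l3l by (simp add: field_simps)
    ultimately show ?thesis by simp
  qed
  moreover have "s * (- ln (1 - l3)) \<le> s * (l3 / (1 - l3))"
    using calculation(2) s0 by (intro mult_left_mono) auto
  ultimately have "1 - (1 - l3) powr s \<le> s * (l3 / (1 - l3))" by simp
  then have "(1 - l3) * (1 - (1 - l3) powr s) \<le> (1 - l3) * (s * (l3 / (1 - l3)))"
    using l3l by (intro mult_left_mono) auto
  also have "\<dots> = s * l3" using l3l by simp
  finally have D1: "(1 - l3) * (1 - (1 - l3) powr s) \<le> s * l3" .
  have "1 - l3 powr s \<le> - s * ln l3" using one_minus_powr_le[of l3 s] l3p s0 by simp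
  also have "\<dots> \<le> s * L" using mult_left_mono[OF lnL, of s] s0 by simp
  finally have D2: "l3 * (1 - l3 powr s) \<le> l3 * (s * L)" using l3p by (intro mult_left_mono) auto
  have Y3: "1 - y3 \<le> s * (l3 * (1 + L))" using y3e D1 D2 by (simp add: algebra_simps)
  have Y3lt: "1 - y3 < y2 - y1"
  proof -
    have "s * (l3 * (1 + L)) < s * ((l1 - l2) * (1 - 2 * l1))" using num s0 by simp
    then show ?thesis using Y3 Y12 by (simp add: algebra_simps)
  qed
  have y3n: "0 \<le> 1 - y3" using y3le by simp
  have p2: "y2 powr (b - 1) > 0" using y1p by simp
  have "(1 - y3 powr b) / b \<le> y2 powr (b - 1) * (1 - y3)"
    using B y32 y3n by (meson mult_right_mono order_trans)
  also have "\<dots> < y2 powr (b - 1) * (y2 - y1)" using Y3lt p2 by simp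
  also have "\<dots> \<le> (y2 powr b - y1 powr b) / b" using A .
  finally have fin: "(1 - y3 powr b) / b < (y2 powr b - y1 powr b) / b" .
  have "a - 1 > 0" using a1 by simp
  from divide_strict_right_mono[OF fin this]
  have "((1 - y3 powr b) / b) / (a - 1) < ((y2 powr b - y1 powr b) / b) / (a - 1)" .
  then show ?thesis using KA KB by simp
qed

definition ip :: "qvec \<Rightarrow> qvec \<Rightarrow> complex" where
  "ip a b = cnj (a $ 1) * b $ 1 + cnj (a $ 2) * b $ 2"

lemma det_id:
  fixes a1 a2 b1 b2 :: complex
  shows "Re (((1/2::real) *\<^sub>R (a1 * cnj a1 + b1 * cnj b1)) * ((1/2::real) *\<^sub>R (a2 * cnj a2 + b2 * cnj b2))
            - ((1/2::real) *\<^sub>R (a1 * cnj a2 + b1 * cnj b2)) * ((1/2::real) *\<^sub>R (a2 * cnj a1 + b2 * cnj b1))) * 4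
         = (cmod a1 ^ 2 + cmod a2 ^ 2) * (cmod b1 ^ 2 + cmod b2 ^ 2) - cmod (cnj a1 * b1 + cnj a2 * b2) ^ 2"
  unfolding cmod_power2 by (simp add: scaleR_conv_of_real field_simps power2_eq_square)

lemma tr_id:
  fixes a1 a2 b1 b2 :: complex
  shows "Re (((1/2::real) *\<^sub>R (a1 * cnj a1 + b1 * cnj b1)) + ((1/2::real) *\<^sub>R (a2 * cnj a2 + b2 * cnj b2)))
     = (cmod a1 ^ 2 + cmod a2 ^ 2 + cmod b1 ^ 2 + cmod b2 ^ 2) / 2"
  unfolding cmod_power2 by (simp add: scaleR_conv_of_real field_simps power2_eq_square)

lemma unit_iff: "unit_vec a \<longleftrightarrow> cmod (a $ 1) ^ 2 + cmod (a $ 2) ^ 2 = 1"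
  unfolding unit_vec_def norm_vec_def L2_set_def sum_2 by simp

lemma lagrange_id:
  fixes a1 a2 b1 b2 :: complex
  shows "(cmod a1 ^ 2 + cmod a2 ^ 2) * (cmod b1 ^ 2 + cmod b2 ^ 2) - cmod (cnj a1 * b1 + cnj a2 * b2) ^ 2
     = cmod (a1 * b2 - a2 * b1) ^ 2"
  unfolding cmod_power2 by (simp add: field_simps power2_eq_square)

lemma ip_le1:
  assumes "unit_vec a" "unit_vec b"
  shows "cmod (ip a b) \<le> 1"
proof -
  have "cmod (ip a b) ^ 2 \<le> 1"
  proof -
    have "0 \<le> cmod (a$1 * b$2 - a$2 * b$1) ^ 2" by simp
    moreover have "1 - cmod (ip a b) ^ 2 = cmod (a$1 * b$2 - a$2 * b$1) ^ 2"
    using lagrange_id[of "a$1" "a$2" "b$1" "b$2"] assms unfolding unit_iff ip_def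
    by simp
    ultimately show ?thesis by linarith
  qed
  then show ?thesis using power2_le_imp_le[of "cmod (ip a b)" 1] by simp
qed

lemma tr_M: "Re (mtrace ((1/2::real) *\<^sub>R (proj a + proj b))) =
   (cmod (a$1) ^ 2 + cmod (a$2) ^ 2 + cmod (b$1) ^ 2 + cmod (b$2) ^ 2) / 2"
  unfolding mtrace_def proj_def cmod_power2 by simp (simp add: scaleR_conv_of_real field_simps power2_eq_square)

lemma det_M: "Re (mdet ((1/2::real) *\<^sub>R (proj a + proj b))) * 4 =
   (cmod (a$1) ^ 2 + cmod (a$2) ^ 2) * (cmod (b$1) ^ 2 + cmod (b$2) ^ 2) - cmod (ip a b) ^ 2"
  unfolding mdet_def proj_def ip_def cmod_power2 by simp (simp add: scaleR_conv_of_real field_simps power2_eq_square)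

lemma S_mix:
  assumes ua: "unit_vec a" and ub: "unit_vec b"
  shows "S_ent al be ((1/2) *\<^sub>R (proj a + proj b)) = Kf al be ((1 - cmod (ip a b)) / 2)"
proof -
  define M where "M = (1/2::real) *\<^sub>R (proj a + proj b)"
  define c where "c = cmod (ip a b)"
  have c0: "0 \<le> c" and c1: "c \<le> 1" using ip_le1[OF ua ub] by (auto simp: c_def)
  have tr: "Re (mtrace M) = 1"
    unfolding M_def using tr_M[of a b] ua ub by (simp add: unit_iff)
  have dt: "Re (mdet M) * 4 = 1 - c ^ 2"
    unfolding M_def c_def using det_M[of a b] ua ub by (simp add: unit_iff)
  have "(Re (mtrace M))\<^sup>2 - 4 * Re (mdet M) = c ^ 2" using tr dt by simp
  then have sq: "sqrt ((Re (mtrace M))\<^sup>2 - 4 * Re (mdet M)) = c"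
    using c0 by simp
  have ep: "eig_plus M = (1 + c) / 2" unfolding eig_plus_def using sq tr by simp
  have em: "eig_minus M = (1 - c) / 2" unfolding eig_minus_def using sq tr by simp
  have "1 - (1 - c) / 2 = (1 + c) / 2" by (simp add: field_simps)
  then have "tr_pow al M = yf al ((1 - c) / 2)" unfolding tr_pow_def ep em yf_def by (simp only:)
  then show ?thesis unfolding S_ent_def Kf_def M_def c_def by simp
qed

lemma ip_self: "unit_vec a \<Longrightarrow> cmod (ip a a) = 1"
proof -
  assume "unit_vec a"
  then have "cmod (a$1) ^ 2 + cmod (a$2) ^ 2 = 1" by (simp add: unit_iff)
  moreover have "ip a a = of_real (cmod (a$1) ^ 2 + cmod (a$2) ^ 2)"
    unfolding ip_def cmod_power2 by (simp add: complex_eq_iff power2_eq_square)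
  ultimately show ?thesis by simp
qed

lemma S_pure: "unit_vec a \<Longrightarrow> S_ent al be (proj a) = 0"
proof -
  assume u: "unit_vec a"
  have "(1/2::real) *\<^sub>R (proj a + proj a) = proj a"
    by (simp add: scaleR_2[symmetric] del: scaleR_2)
  then have "S_ent al be (proj a) = Kf al be ((1 - cmod (ip a a)) / 2)"
    using S_mix[OF u u, of al be] by simp
  then show ?thesis using ip_self[OF u] by (simp add: Kf_0)
qed

lemma J_eq: "unit_vec a \<Longrightarrow> unit_vec b \<Longrightarrow>
   J_div al be (proj a) (proj b) = Kf al be ((1 - cmod (ip a b)) / 2)"
  unfolding J_div_def by (simp add: S_mix S_pure)

lemma ip_nonneg_half:
  assumes "unit_vec a" "unit_vec b"
  shows "0 \<le> (1 - cmod (ip a b)) / 2" "(1 - cmod (ip a b)) / 2 \<le> 1/2"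
  using ip_le1[OF assms] by auto

lemma J_nonneg: "1 < al \<Longrightarrow> be \<noteq> 0 \<Longrightarrow> unit_vec a \<Longrightarrow> unit_vec b \<Longrightarrow>
   0 \<le> J_div al be (proj a) (proj b)"
  using J_eq Kf_nonneg ip_nonneg_half by simp

lemma stab_unit: "\<phi> \<in> stab_pure \<Longrightarrow> unit_vec \<phi>"
  unfolding stab_pure_def unit_iff by (auto simp: power2_eq_square norm_divide)

lemma stab_fin: "finite stab_pure" "stab_pure \<noteq> {}"
  unfolding stab_pure_def by auto

lemma M_pure_le: "\<phi> \<in> stab_pure \<Longrightarrow> M_pure al be \<psi> \<le> J_div al be (proj \<psi>) (proj \<phi>)"
  unfolding M_pure_def using stab_fin by (intro Min_le) auto

lemma M_pure_ge: "(\<And>\<phi>. \<phi> \<in> stab_pure \<Longrightarrow> x \<le> J_div al be (proj \<psi>) (proj \<phi>)) \<Longrightarrow> x \<le> M_pure al be \<psi>"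
  unfolding M_pure_def using stab_fin by (subst Min_ge_iff) auto

lemma M_pure_nonneg: "1 < al \<Longrightarrow> be \<noteq> 0 \<Longrightarrow> unit_vec \<psi> \<Longrightarrow> 0 \<le> M_pure al be \<psi>"
  by (rule M_pure_ge, rule J_nonneg) (auto intro: stab_unit)

lemma cj_add: "(U::qmat) ** (A + B) ** V = U ** A ** V + U ** B ** V"
  by (simp add: vec_eq_iff matrix_matrix_mult_def sum.distrib algebra_simps)

lemma cj_scale: "(U::qmat) ** (r *\<^sub>R A) ** V = r *\<^sub>R (U ** A ** V)"
  by (metis matrix_scalar_ac scalar_matrix_assoc)

lemma cj_sum: "finite S \<Longrightarrow> (U::qmat) ** (\<Sum>x\<in>S. f x) ** V = (\<Sum>x\<in>S. U ** f x ** V)"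
proof (induction S rule: finite_induct)
  case empty then show ?case by simp
next
  case (insert x F) then show ?case by (simp add: cj_add)
qed

lemma proj_U: "proj (U *v x) = U ** proj x ** adj U"
  by (simp add: vec_eq_iff proj_def matrix_matrix_mult_def matrix_vector_mult_def adj_def sum_2 algebra_simps forall_2)

definition wq :: complex where "wq = Complex (40921601/40972801) (2047680/40972801)"

definition U0 :: qmat where
  "U0 = (\<chi> i j. if i = j then (if i = 1 then 1 else wq) else 0)"

lemma wq_cnj: "wq * cnj wq = 1" "cnj wq * wq = 1"
  by (simp_all add: wq_def complex_eq_iff)

lemma wq_norm: "cmod wq = 1"
proof -
  have "of_real (cmod wq ^ 2) = (1::complex)" using wq_cnj by (simp only: complex_norm_square)
  then have "cmod wq ^ 2 = 1" by (metis of_real_eq_1_iff)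
  then show ?thesis using norm_ge_zero[of wq] by (auto simp: power2_eq_1_iff)
qed

lemma U0_apply: "(U0 *v x) $ 1 = x $ 1" "(U0 *v x) $ 2 = wq * x $ 2"
  by (simp_all add: U0_def matrix_vector_mult_def sum_2)

lemma U0_unitary: "unitary U0"
  unfolding unitary_def
  by (simp add: vec_eq_iff U0_def adj_def matrix_matrix_mult_def mat_def sum_2 forall_2 wq_cnj)

lemma unit_U0: "unit_vec x \<Longrightarrow> unit_vec (U0 *v x)"
  by (simp add: unit_iff U0_apply norm_mult wq_norm)

lemma mult_cnj_eq: "z * cnj z = of_real (cmod z ^ 2)"
  by (simp only: complex_norm_square)

lemma ip_U0: "ip (U0 *v x) x = of_real (cmod (x$1) ^ 2) + cnj wq * of_real (cmod (x$2) ^ 2)"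
proof -
  have "ip (U0 *v x) x = x$1 * cnj (x$1) + cnj wq * (x$2 * cnj (x$2))"
    unfolding ip_def U0_apply by (simp add: mult.commute mult.left_commute)
  then show ?thesis by (simp only: mult_cnj_eq)
qed

lemma stab_cases:
  assumes "\<phi> \<in> stab_pure"
  shows "(cmod (\<phi>$1) ^ 2 = 1 \<and> cmod (\<phi>$2) ^ 2 = 0) \<or> (cmod (\<phi>$1) ^ 2 = 0 \<and> cmod (\<phi>$2) ^ 2 = 1)
     \<or> (cmod (\<phi>$1) ^ 2 = 1/2 \<and> cmod (\<phi>$2) ^ 2 = 1/2)"
  using assms unfolding stab_pure_def by (auto simp: power2_eq_square norm_divide)

lemma cmod_half: "cmod (of_real (1/2) + cnj wq * of_real (1/2)) = 6399/6401"
proof -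
  have "cmod (of_real (1/2) + cnj wq * of_real (1/2)) = sqrt ((6399/6401) ^ 2)"
    unfolding cmod_def by (simp add: wq_def power2_eq_square)
  then show ?thesis by simp
qed

lemma gen_pure_bound:
  assumes al: "1 < al" and be: "be \<noteq> 0" and ph: "\<phi> \<in> stab_pure"
  shows "M_pure al be (U0 *v \<phi>) \<le> Kf al be (1/6401)"
proof -
  have u: "unit_vec \<phi>" using ph by (rule stab_unit)
  have "M_pure al be (U0 *v \<phi>) \<le> J_div al be (proj (U0 *v \<phi>)) (proj \<phi>)" using ph by (rule M_pure_le)
  also have "\<dots> = Kf al be ((1 - cmod (ip (U0 *v \<phi>) \<phi>)) / 2)" using u unit_U0[OF u] by (simp add: J_eq)
  also have "\<dots> \<le> Kf al be (1/6401)"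
  proof -
    from stab_cases[OF ph] consider "cmod (\<phi>$1) ^ 2 = 1 \<and> cmod (\<phi>$2) ^ 2 = 0"
      | "cmod (\<phi>$1) ^ 2 = 0 \<and> cmod (\<phi>$2) ^ 2 = 1" | "cmod (\<phi>$1) ^ 2 = 1/2 \<and> cmod (\<phi>$2) ^ 2 = 1/2"
      by blast
    then show ?thesis
    proof cases
      case 1
      then have "ip (U0 *v \<phi>) \<phi> = 1" by (simp only: ip_U0) simp
      then show ?thesis using Kf_nonneg[of al be "1/6401"] al be by (simp add: Kf_0)
    next
      case 2
      then have "ip (U0 *v \<phi>) \<phi> = cnj wq" by (simp only: ip_U0) simp
      then show ?thesis using Kf_nonneg[of al be "1/6401"] al be by (simp add: Kf_0 wq_norm)
    next
      case 3
      then have "ip (U0 *v \<phi>) \<phi> = of_real (1/2) + cnj wq * of_real (1/2)" by (simp only: ip_U0)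
      then have "cmod (ip (U0 *v \<phi>) \<phi>) = 6399/6401" using cmod_half by simp
      then have "(1 - cmod (ip (U0 *v \<phi>) \<phi>)) / 2 = 1/6401" by simp
      then show ?thesis by (simp only:)
    qed
  qed
  finally show ?thesis .
qed

lemma mixed_bound:
  assumes al: "1 < al" and be: "be \<noteq> 0" and rho: "\<rho> \<in> stab_states"
  shows "M_mixed al be (U0 ** \<rho> ** adj U0) \<le> Kf al be (1/6401)"
proof -
  define S where "S = proj ` stab_pure"
  have fS: "finite S" unfolding S_def using stab_fin by simp
  from rho obtain u where u0: "\<forall>x\<in>S. 0 \<le> u x" and u1: "sum u S = 1"
      and ur: "(\<Sum>x\<in>S. u x *\<^sub>R x) = \<rho>"
    unfolding stab_states_def convex_hull_finite[OF fS[unfolded S_def]] S_def by blast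
  obtain ys where ysd: "distinct ys" and yss: "set ys = S" using finite_distinct_list[OF fS] by blast
  define g where "g y = (SOME \<phi>. \<phi> \<in> stab_pure \<and> proj \<phi> = y)" for y
  have g: "g y \<in> stab_pure \<and> proj (g y) = y" if "y \<in> S" for y
  proof -
    have "\<exists>\<phi>. \<phi> \<in> stab_pure \<and> proj \<phi> = y" using that unfolding S_def by blast
    then show ?thesis unfolding g_def by (rule someI_ex)
  qed
  define ds where "ds = map (\<lambda>y. (u y, U0 *v g y)) ys"
  let ?K = "Kf al be (1/6401)"
  have dec: "decomp (U0 ** \<rho> ** adj U0) ds"
    unfolding decomp_def
  proof (intro conjI)
    show "\<forall>(p, \<psi>)\<in>set ds. 0 \<le> p \<and> unit_vec \<psi>"
      unfolding ds_def using u0 g yss stab_unit unit_U0 by auto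
    have "(\<Sum>(p, \<psi>)\<leftarrow>ds. p) = sum_list (map u ys)"
      unfolding ds_def by (simp add: comp_def)
    also have "\<dots> = sum u S" using ysd yss by (simp add: sum_list_distinct_conv_sum_set)
    finally show "(\<Sum>(p, \<psi>)\<leftarrow>ds. p) = 1" using u1 by simp
    have "(\<Sum>(p, \<psi>)\<leftarrow>ds. p *\<^sub>R proj \<psi>) = sum_list (map (\<lambda>y. u y *\<^sub>R proj (U0 *v g y)) ys)"
      unfolding ds_def by (simp add: comp_def)
    also have "\<dots> = (\<Sum>y\<in>S. u y *\<^sub>R proj (U0 *v g y))"
      using ysd yss by (simp add: sum_list_distinct_conv_sum_set)
    also have "\<dots> = (\<Sum>y\<in>S. U0 ** (u y *\<^sub>R y) ** adj U0)"
      using g by (intro sum.cong) (auto simp: proj_U cj_scale)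
    also have "\<dots> = U0 ** \<rho> ** adj U0"
      using cj_sum[OF fS, where U=U0 and f="\<lambda>y. u y *\<^sub>R y" and V="adj U0"] ur by simp
    finally show "U0 ** \<rho> ** adj U0 = (\<Sum>(p, \<psi>)\<leftarrow>ds. p *\<^sub>R proj \<psi>)" by simp
  qed
  have val: "(\<Sum>(p, \<psi>)\<leftarrow>ds. p * M_pure al be \<psi>) \<le> ?K"
  proof -
    have "(\<Sum>(p, \<psi>)\<leftarrow>ds. p * M_pure al be \<psi>) = sum_list (map (\<lambda>y. u y * M_pure al be (U0 *v g y)) ys)"
      unfolding ds_def by (simp add: comp_def)
    also have "\<dots> = (\<Sum>y\<in>S. u y * M_pure al be (U0 *v g y))"
      using ysd yss by (simp add: sum_list_distinct_conv_sum_set)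
    also have "\<dots> \<le> (\<Sum>y\<in>S. u y * ?K)"
      using g u0 gen_pure_bound[OF al be] by (intro sum_mono mult_left_mono) auto
    also have "\<dots> = ?K" using u1 by (simp add: sum_distrib_right[symmetric])
    finally show ?thesis .
  qed
  have bdd: "bdd_below {(\<Sum>(p, \<psi>)\<leftarrow>ds. p * M_pure al be \<psi>) | ds. decomp (U0 ** \<rho> ** adj U0) ds}"
  proof (rule bdd_belowI[of _ 0])
    fix x assume "x \<in> {(\<Sum>(p, \<psi>)\<leftarrow>ds. p * M_pure al be \<psi>) | ds. decomp (U0 ** \<rho> ** adj U0) ds}"
    then obtain ds' where x: "x = (\<Sum>(p, \<psi>)\<leftarrow>ds'. p * M_pure al be \<psi>)" and d: "decomp (U0 ** \<rho> ** adj U0) ds'"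
      by blast
    have "\<forall>(p, \<psi>)\<in>set ds'. 0 \<le> p \<and> unit_vec \<psi>" using d unfolding decomp_def by blast
    then have "\<forall>z\<in>set (map (\<lambda>(p, \<psi>). p * M_pure al be \<psi>) ds'). 0 \<le> z"
      using M_pure_nonneg[OF al be] by auto
    then show "0 \<le> x" unfolding x by (intro sum_list_nonneg) blast
  qed
  have "M_mixed al be (U0 ** \<rho> ** adj U0) \<le> (\<Sum>(p, \<psi>)\<leftarrow>ds. p * M_pure al be \<psi>)"
    unfolding M_mixed_def using dec bdd by (intro cInf_lower) auto
  then show ?thesis using val by simp
qed

lemma gen_power_bound:
  assumes al: "1 < al" and be: "be \<noteq> 0"
  shows "magic_gen_power al be U0 \<le> Kf al be (1/6401)"
proof -
  have ne: "stab_states \<noteq> {}"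
    unfolding stab_states_def using stab_fin(2) hull_subset[of "proj ` stab_pure" convex] by blast
  show ?thesis unfolding magic_gen_power_def
    using ne mixed_bound[OF al be] by (intro cSUP_least) auto
qed

definition v1 :: qvec where "v1 = vector [15/17, Complex (168/493) (160/493)]"
definition psi0 :: qvec where "psi0 = vector [15/17, Complex (7202457768/20199590893) (6203445920/20199590893)]"

lemma wpsi: "wq * Complex (7202457768/20199590893) (6203445920/20199590893) = Complex (168/493) (160/493)"
  by (simp add: wq_def complex_eq_iff)
definition xplus :: qvec where "xplus = vector [1 / sqrt 2, 1 / sqrt 2]"

lemma xplus_stab: "xplus \<in> stab_pure" unfolding xplus_def stab_pure_def by simp

lemma U0_psi0: "U0 *v psi0 = v1"
  by (simp add: vec_eq_iff forall_2 U0_apply psi0_def v1_def wpsi)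

lemma v1_unit: "unit_vec v1"
  by (simp add: unit_iff v1_def cmod_def power2_eq_square)

lemma psi0_unit: "unit_vec psi0"
proof -
  have e: "cmod (wq * psi0 $ 2) = cmod (psi0 $ 2)" by (simp only: norm_mult wq_norm mult_1)
  have "wq * psi0 $ 2 = v1 $ 2" unfolding psi0_def v1_def vector_2 by (rule wpsi)
  then have "cmod (psi0 $ 2) = cmod (v1 $ 2)" using e by simp
  moreover have "psi0 $ 1 = v1 $ 1" unfolding psi0_def v1_def vector_2 ..
  ultimately show ?thesis using v1_unit unfolding unit_iff by simp
qed

lemma cmod_le_of: "Re z ^ 2 + Im z ^ 2 \<le> r ^ 2 \<Longrightarrow> 0 \<le> r \<Longrightarrow> cmod z \<le> r"
proof -
  assume h: "Re z ^ 2 + Im z ^ 2 \<le> r ^ 2" "0 \<le> r"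
  have "cmod z = sqrt (Re z ^ 2 + Im z ^ 2)" by (simp add: cmod_def)
  also have "\<dots> \<le> sqrt (r ^ 2)" using h(1) by (rule real_sqrt_le_mono)
  also have "\<dots> = r" using h(2) by simp
  finally show ?thesis .
qed

lemma cmod_ge_of: "r ^ 2 \<le> Re z ^ 2 + Im z ^ 2 \<Longrightarrow> 0 \<le> r \<Longrightarrow> r \<le> cmod z"
  unfolding cmod_def by (simp add: real_le_rsqrt)

definition hh :: complex where "hh = of_real (1 / sqrt 2)"

lemma stab_alt: "stab_pure = {vector [1, 0], vector [0, 1], vector [hh, hh], vector [hh, hh * (-1)],
   vector [hh, hh * \<i>], vector [hh, hh * (- \<i>)]}"
proof -
  have "(map complex_of_real [1 / sqrt 2, 1 / sqrt 2]) = [hh, hh]" by (simp add: hh_def)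
  moreover have "(map complex_of_real [1 / sqrt 2, - 1 / sqrt 2]) = [hh, hh * (-1)]" by (simp add: hh_def)
  moreover have "[complex_of_real (1 / sqrt 2), \<i> / complex_of_real (sqrt 2)] = [hh, hh * \<i>]"
    by (simp add: hh_def divide_inverse mult.commute)
  moreover have "[complex_of_real (1 / sqrt 2), - \<i> / complex_of_real (sqrt 2)] = [hh, hh * (- \<i>)]"
    by (simp add: hh_def divide_inverse mult.commute)
  ultimately show ?thesis unfolding stab_pure_def by (simp only:)
qed
lemma ip_hh: "ip v (vector [hh, hh * s]) = hh * (cnj (v$1) + cnj (v$2) * s)"
  by (simp add: ip_def hh_def algebra_simps)

lemma ip_hh1: "ip v (vector [hh, hh]) = hh * (cnj (v$1) + cnj (v$2))"
  by (simp add: ip_def hh_def algebra_simps)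

lemma nsq_hh: "Re (hh * z) ^ 2 + Im (hh * z) ^ 2 = (Re z ^ 2 + Im z ^ 2) / 2"
  by (simp add: hh_def power_mult_distrib power_divide)

lemma v1c: "v1 $ 1 = 15/17" "v1 $ 2 = Complex (168/493) (160/493)" by (simp_all add: v1_def)
lemma ovl: "Re (ip v1 (vector [hh, hh * s])) ^ 2 + Im (ip v1 (vector [hh, hh * s])) ^ 2
   = (Re (15/17 + Complex (168/493) (-160/493) * s) ^ 2 + Im (15/17 + Complex (168/493) (-160/493) * s) ^ 2) / 2"
  unfolding ip_hh nsq_hh v1c by simp
lemma ovl1: "Re (ip v1 (vector [hh, hh])) ^ 2 + Im (ip v1 (vector [hh, hh])) ^ 2
   = (Re (15/17 + Complex (168/493) (-160/493)) ^ 2 + Im (15/17 + Complex (168/493) (-160/493)) ^ 2) / 2"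
  using ovl[of 1] by simp
lemma v1_overlaps: "\<phi> \<in> stab_pure \<Longrightarrow> Re (ip v1 \<phi>) ^ 2 + Im (ip v1 \<phi>) ^ 2 \<le> (179/200) ^ 2"
  unfolding stab_alt
  apply (elim insertE)
  apply (simp_all only: ovl ovl1 emptyE)
  apply (simp_all add: ip_def v1c power2_eq_square)
  done
lemma xplus_hh: "xplus = vector [hh, hh]"
  by (simp add: xplus_def hh_def)

lemma psi0_overlap: "(451/500) ^ 2 \<le> Re (ip psi0 xplus) ^ 2 + Im (ip psi0 xplus) ^ 2"
  unfolding xplus_hh
  apply (simp only: ip_hh1 nsq_hh)
  apply (simp add: psi0_def power2_eq_square)
  done

lemma ln_bound: "- ln (1/6401 :: real) \<le> 13 * (25/36)"
proof -
  have "- ln (1/6401 :: real) = ln 6401" by (simp add: ln_div)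
  also have "\<dots> \<le> ln ((2::real) ^ 13)" by simp
  also have "\<dots> = real 13 * ln 2" by (rule ln_realpow)
  also have "\<dots> = 13 * ln 2" by simp
  also have "\<dots> \<le> 13 * (25/36)" using ln2_le_25_over_36 by simp
  finally show ?thesis .
qed

theorem proposition5:
  fixes \<alpha> \<beta> :: real
  assumes "1 < \<alpha>" and "\<alpha> < 2" and "\<beta> < 1" and "\<beta> \<noteq> 0"
  shows "\<exists>U \<psi>. unitary U \<and> unit_vec \<psi> \<and>
           M_pure \<alpha> \<beta> (U *v \<psi>) - M_pure \<alpha> \<beta> \<psi> > magic_gen_power \<alpha> \<beta> U"
proof (intro exI conjI)
  show "unitary U0" by (rule U0_unitary)
  show "unit_vec psi0" by (rule psi0_unit)
  have al: "1 < \<alpha>" and be: "\<beta> \<noteq> 0" using assms by auto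
  have A: "Kf \<alpha> \<beta> (21/400) \<le> M_pure \<alpha> \<beta> (U0 *v psi0)"
    unfolding U0_psi0
  proof (rule M_pure_ge)
    fix \<phi> assume ph: "\<phi> \<in> stab_pure"
    have c: "cmod (ip v1 \<phi>) \<le> 179/200" using v1_overlaps[OF ph] by (rule cmod_le_of) simp
    have "Kf \<alpha> \<beta> (21/400) \<le> Kf \<alpha> \<beta> ((1 - cmod (ip v1 \<phi>)) / 2)"
      using c ip_nonneg_half[OF v1_unit stab_unit[OF ph]] al be by (intro Kf_mono) auto
    also have "\<dots> = J_div \<alpha> \<beta> (proj v1) (proj \<phi>)"
      using J_eq[OF v1_unit stab_unit[OF ph]] by simp
    finally show "Kf \<alpha> \<beta> (21/400) \<le> J_div \<alpha> \<beta> (proj v1) (proj \<phi>)" .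
  qed
  have B: "M_pure \<alpha> \<beta> psi0 \<le> Kf \<alpha> \<beta> (49/1000)"
  proof -
    have c: "451/500 \<le> cmod (ip psi0 xplus)" using psi0_overlap by (rule cmod_ge_of) simp
    have xu: "unit_vec xplus" using xplus_stab by (rule stab_unit)
    have "M_pure \<alpha> \<beta> psi0 \<le> J_div \<alpha> \<beta> (proj psi0) (proj xplus)" using xplus_stab by (rule M_pure_le)
    also have "\<dots> = Kf \<alpha> \<beta> ((1 - cmod (ip psi0 xplus)) / 2)" using J_eq[OF psi0_unit xu] by simp
    also have "\<dots> \<le> Kf \<alpha> \<beta> (49/1000)"
      using c ip_nonneg_half[OF psi0_unit xu] al be by (intro Kf_mono) auto
    finally show ?thesis .
  qed
  have C: "Kf \<alpha> \<beta> (1/6401) < Kf \<alpha> \<beta> (21/400) - Kf \<alpha> \<beta> (49/1000)"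
  proof (rule key_ineq[where L="13 * (25/36)"])
    show "(1/6401::real) * (1 + 13 * (25/36)) < (21/400 - 49/1000) * (1 - 2 * (21/400))" by simp
  qed (use assms ln_bound in simp_all)
  have D: "magic_gen_power \<alpha> \<beta> U0 \<le> Kf \<alpha> \<beta> (1/6401)" using gen_power_bound[OF al be] .
  show "M_pure \<alpha> \<beta> (U0 *v psi0) - M_pure \<alpha> \<beta> psi0 > magic_gen_power \<alpha> \<beta> U0"
    using A B C D by linarith
qed

end
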